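(* Let $w^0\subset U$ be any 3-dimensional Lagrangian subspace of the 6-dimensional symplectic space $U$, with Plücker coordinates $\tilde\pi_{ijk}$. Define $S_0:=\tilde\pi_{123}$, $S_1:=\tilde\pi_{231^*}$, $S_2:=-\tilde\pi_{132^*}$, $S_3:=\tilde\pi_{123^*}$, $S_{0^*}:=\tilde\pi_{1^*2^*3^*}$, $S_{1^*}:=\tilde\pi_{12^*3^*}$, $S_{2^*}:=-\tilde\pi_{21^*3^*}$, $S_{3^*}:=\tilde\pi_{31^*2^*}$. Then $$S_0^2S_{0^*}^2+S_1^2S_{1^*}^2+S_2^2S_{2^*}^2+S_3^2S_{3^*}^2=2S_0S_{0^*}(S_1S_{1^*}+S_2S_{2^*}+S_3S_{3^*})+2(S_1S_{1^*}S_2S_{2^*}+S_1S_{1^*}S_3S_{3^*}+S_2S_{2^*}S_3S_{3^*})-4S_{0^*}S_1S_2S_3-4S_0S_{1^*}S_{2^*}S_{3^*}.$$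
   Context: $U$ has basis $f_1,f_2,f_3,f_1^*,f_2^*,f_3^*$ and symplectic form $\omega=\sum_{j=1}^3f_j\wedge f_j^*$, i.e. $\omega(u,v)=\sum_j(u_jv_j^*-u_j^*v_j)$ in coordinates $u=\sum_j(u_jf_j+u_j^*f_j^* )$. A Lagrangian subspace is a 3-dimensional subspace on which $\omega$ vanishes. For a 3-dimensional $w$ with basis $w_1,w_2,w_3$, the Plücker coordinates $\tilde\pi_{ijk}$ ($i,j,k$ distinct in $\{1,2,3,1^*,2^*,3^*\}$) are the unique totally antisymmetric quantities with $w_1\wedge w_2\wedge w_3=\sum_{\{i,j,k\}}\tilde\pi_{ijk}\,f_i\wedge f_j\wedge f_k$, the sum over 3-element subsets each taken once in some order (the result is independent of the order by antisymmetry); they are defined up to a common scalar. *)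

theory Defs
  imports Complex_Main
begin

text \<open>Vectors of U are coordinate functions nat \<Rightarrow> complex, only indices 0..5 matter:
  index 0,1,2 = coefficient of f1,f2,f3 and index 3,4,5 = coefficient of f1*,f2*,f3*.\<close>

definition omega :: "(nat \<Rightarrow> complex) \<Rightarrow> (nat \<Rightarrow> complex) \<Rightarrow> complex" where
  "omega u v = (\<Sum>j<3. u j * v (j + 3) - u (j + 3) * v j)"

definition lincomb3 :: "complex \<Rightarrow> complex \<Rightarrow> complex \<Rightarrow> (nat \<Rightarrow> complex) \<Rightarrow> (nat \<Rightarrow> complex)
    \<Rightarrow> (nat \<Rightarrow> complex) \<Rightarrow> (nat \<Rightarrow> complex)" where
  "lincomb3 a b c w1 w2 w3 = (\<lambda>i. a * w1 i + b * w2 i + c * w3 i)"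

definition lin_indep3 :: "(nat \<Rightarrow> complex) \<Rightarrow> (nat \<Rightarrow> complex) \<Rightarrow> (nat \<Rightarrow> complex) \<Rightarrow> bool" where
  "lin_indep3 w1 w2 w3 \<longleftrightarrow>
     (\<forall>a b c. (\<forall>i<6. lincomb3 a b c w1 w2 w3 i = 0) \<longrightarrow> a = 0 \<and> b = 0 \<and> c = 0)"

definition lagrangian_span :: "(nat \<Rightarrow> complex) \<Rightarrow> (nat \<Rightarrow> complex) \<Rightarrow> (nat \<Rightarrow> complex) \<Rightarrow> bool" where
  "lagrangian_span w1 w2 w3 \<longleftrightarrow>
     (\<forall>a b c a' b' c'. omega (lincomb3 a b c w1 w2 w3) (lincomb3 a' b' c' w1 w2 w3) = 0)"

text \<open>Pluecker coordinate: coefficient of f_i \<and> f_j \<and> f_k in w1 \<and> w2 \<and> w3,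
  i.e. the 3x3 minor det [w_a(idx_b)] (Leibniz formula).\<close>
definition pl :: "(nat \<Rightarrow> complex) \<Rightarrow> (nat \<Rightarrow> complex) \<Rightarrow> (nat \<Rightarrow> complex) \<Rightarrow> nat \<Rightarrow> nat \<Rightarrow> nat \<Rightarrow> complex" where
  "pl w1 w2 w3 i j k =
      w1 i * w2 j * w3 k + w1 j * w2 k * w3 i + w1 k * w2 i * w3 j
    - w1 i * w2 k * w3 j - w1 j * w2 i * w3 k - w1 k * w2 j * w3 i"

end

theory Submission
  imports Defs
begin

lemma contr:
  "pl w1 w2 w3 0 3 k + pl w1 w2 w3 1 4 k + pl w1 w2 w3 2 5 k =
   w3 k * omega w1 w2 - w2 k * omega w1 w3 + w1 k * omega w2 w3"
  unfolding pl_def omega_def by (simp add: lessThan_nat_numeral; algebra)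

lemma quartic_abs:
  fixes x012 x013 x014 x015 x023 x024 x034 x035 x045 x123 x134 x135 x234 x345 x025 x125 x124 x235 x245 x145 :: complex
  assumes L: "x025 = - x014" "x125 = x013" "x124 = - x023" "x235 = - x134" "x245 = x034" "x145 = - x035"
  and P: "(-1)*x012*x034 + (1)*x013*x024 + (-1)*x014*x023 = 0"
    "(-1)*x012*x035 + (1)*x013*x025 + (-1)*x015*x023 = 0"
    "(-1)*x012*x045 + (1)*x014*x025 + (-1)*x015*x024 = 0"
    "(-1)*x013*x045 + (1)*x014*x035 + (-1)*x015*x034 = 0"
    "(-1)*x012*x134 + (1)*x013*x124 + (-1)*x014*x123 = 0"
    "(-1)*x012*x135 + (1)*x013*x125 + (-1)*x015*x123 = 0"
    "(-1)*x013*x145 + (1)*x014*x135 + (-1)*x015*x134 = 0"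
    "(1)*x012*x345 + (-1)*x013*x245 + (1)*x014*x235 + (-1)*x015*x234 = 0"
    "(-1)*x023*x045 + (1)*x024*x035 + (-1)*x025*x034 = 0"
    "(-1)*x012*x234 + (1)*x023*x124 + (-1)*x024*x123 = 0"
    "(-1)*x012*x345 + (-1)*x023*x145 + (1)*x024*x135 + (-1)*x025*x134 = 0"
    "(-1)*x023*x245 + (1)*x024*x235 + (-1)*x025*x234 = 0"
    "(-1)*x013*x345 + (1)*x034*x135 + (-1)*x035*x134 = 0"
    "(-1)*x014*x235 + (1)*x024*x135 + (-1)*x034*x125 + (-1)*x045*x123 = 0"
  shows "x012\<^sup>2 * x345\<^sup>2 + x123\<^sup>2 * x045\<^sup>2 + (- x024)\<^sup>2 * (- x135)\<^sup>2 + x015\<^sup>2 * x234\<^sup>2 =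
    2 * x012 * x345 * (x123 * x045 + (- x024) * (- x135) + x015 * x234)
    + 2 * (x123 * x045 * (- x024) * (- x135) + x123 * x045 * x015 * x234 + (- x024) * (- x135) * x015 * x234)
    - 4 * x345 * x123 * (- x024) * x015 - 4 * x012 * x045 * (- x135) * x234"
proof -
  have h0: "(-1)*x012*x034 + (1)*x013*x024 + (-1)*x014*x023 = 0" using P(1) L by algebra
  have h1: "(-1)*x012*x035 + (-1)*x013*x014 + (-1)*x015*x023 = 0" using P(2) L by algebra
  have h2: "(-1)*x012*x045 + (-1)*x014*x014 + (-1)*x015*x024 = 0" using P(3) L by algebra
  have h3: "(-1)*x013*x045 + (1)*x014*x035 + (-1)*x015*x034 = 0" using P(4) L by algebra
  have h4: "(-1)*x012*x134 + (-1)*x013*x023 + (-1)*x014*x123 = 0" using P(5) L by algebra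
  have h5: "(-1)*x012*x135 + (1)*x013*x013 + (-1)*x015*x123 = 0" using P(6) L by algebra
  have h6: "(1)*x013*x035 + (1)*x014*x135 + (-1)*x015*x134 = 0" using P(7) L by algebra
  have h7: "(1)*x012*x345 + (-1)*x013*x034 + (-1)*x014*x134 + (-1)*x015*x234 = 0" using P(8) L by algebra
  have h8: "(1)*x014*x034 + (-1)*x023*x045 + (1)*x024*x035 = 0" using P(9) L by algebra
  have h9: "(-1)*x012*x234 + (-1)*x023*x023 + (-1)*x024*x123 = 0" using P(10) L by algebra
  have h10: "(-1)*x012*x345 + (1)*x014*x134 + (1)*x023*x035 + (1)*x024*x135 = 0" using P(11) L by algebra
  have h11: "(1)*x014*x234 + (-1)*x023*x034 + (-1)*x024*x134 = 0" using P(12) L by algebra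
  have h12: "(-1)*x013*x345 + (1)*x034*x135 + (-1)*x035*x134 = 0" using P(13) L by algebra
  have h13: "(-1)*x013*x034 + (1)*x014*x134 + (1)*x024*x135 + (-1)*x045*x123 = 0" using P(14) L by algebra
  have e: "(x012\<^sup>2 * x345\<^sup>2 + x123\<^sup>2 * x045\<^sup>2 + (- x024)\<^sup>2 * (- x135)\<^sup>2 + x015\<^sup>2 * x234\<^sup>2) - (    2 * x012 * x345 * (x123 * x045 + (- x024) * (- x135) + x015 * x234)
    + 2 * (x123 * x045 * (- x024) * (- x135) + x123 * x045 * x015 * x234 + (- x024) * (- x135) * x015 * x234)
    - 4 * x345 * x123 * (- x024) * x015 - 4 * x012 * x045 * (- x135) * x234) = ((2)*x013*x345 + (1)*x034*x135 + (2)*x035*x134)*((-1)*x012*x034 + (1)*x013*x024 + (-1)*x014*x023) + ((-3)*x034*x134)*((-1)*x012*x035 + (-1)*x013*x014 + (-1)*x015*x023) + ((2)*x123*x345 + (1)*x134*x134 + (1)*x135*x234)*((-1)*x012*x045 + (-1)*x014*x014 + (-1)*x015*x024) + ((2)*x013*x234 + (1)*x023*x134 + (1)*x034*x123)*((-1)*x013*x045 + (1)*x014*x035 + (-1)*x015*x034) + ((-2)*x014*x345 + (1)*x034*x035 + (-1)*x045*x134)*((-1)*x012*x134 + (-1)*x013*x023 + (-1)*x014*x123) + ((2)*x024*x345 + (-1)*x034*x034 + (2)*x045*x234)*((-1)*x012*x135 + (1)*x013*x013 + (-1)*x015*x123) + ((1)*x014*x234 + (2)*x023*x034 + (-1)*x024*x134)*((1)*x013*x035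 + (1)*x014*x135 + (-1)*x015*x134) + ((1)*x012*x345 + (-1)*x013*x034 + (-1)*x015*x234 + (1)*x024*x135)*((1)*x012*x345 + (-1)*x013*x034 + (-1)*x014*x134 + (-1)*x015*x234) + ((-1)*x023*x135)*((1)*x014*x034 + (-1)*x023*x045 + (1)*x024*x035) + ((1)*x045*x135)*((-1)*x012*x234 + (-1)*x023*x023 + (-1)*x024*x123) + ((-4)*x013*x034 + (1)*x014*x134 + (1)*x024*x135)*((-1)*x012*x345 + (1)*x014*x134 + (1)*x023*x035 + (1)*x024*x135) + ((-3)*x013*x035)*((1)*x014*x234 + (-1)*x023*x034 + (-1)*x024*x134) + ((4)*x013*x024)*((-1)*x013*x345 + (1)*x034*x135 + (-1)*x035*x134) + ((-1)*x045*x123)*((-1)*x013*x034 + (1)*x014*x134 + (1)*x024*x135 + (-1)*x045*x123)" by algebra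
  have "(x012\<^sup>2 * x345\<^sup>2 + x123\<^sup>2 * x045\<^sup>2 + (- x024)\<^sup>2 * (- x135)\<^sup>2 + x015\<^sup>2 * x234\<^sup>2) - (    2 * x012 * x345 * (x123 * x045 + (- x024) * (- x135) + x015 * x234)
    + 2 * (x123 * x045 * (- x024) * (- x135) + x123 * x045 * x015 * x234 + (- x024) * (- x135) * x015 * x234)
    - 4 * x345 * x123 * (- x024) * x015 - 4 * x012 * x045 * (- x135) * x234) = 0" unfolding e using h0 h1 h2 h3 h4 h5 h6 h7 h8 h9 h10 h11 h12 h13 by simp
  then show ?thesis by simp
qed

theorem mainTheorem12:
  fixes w1 w2 w3 :: "nat \<Rightarrow> complex"
  assumes "lin_indep3 w1 w2 w3"
    and "lagrangian_span w1 w2 w3"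
  defines "S0 \<equiv> pl w1 w2 w3 0 1 2"
    and "S1 \<equiv> pl w1 w2 w3 1 2 3"
    and "S2 \<equiv> - pl w1 w2 w3 0 2 4"
    and "S3 \<equiv> pl w1 w2 w3 0 1 5"
    and "S0' \<equiv> pl w1 w2 w3 3 4 5"
    and "S1' \<equiv> pl w1 w2 w3 0 4 5"
    and "S2' \<equiv> - pl w1 w2 w3 1 3 5"
    and "S3' \<equiv> pl w1 w2 w3 2 3 4"
  shows "S0\<^sup>2 * S0'\<^sup>2 + S1\<^sup>2 * S1'\<^sup>2 + S2\<^sup>2 * S2'\<^sup>2 + S3\<^sup>2 * S3'\<^sup>2 =
    2 * S0 * S0' * (S1 * S1' + S2 * S2' + S3 * S3')
    + 2 * (S1 * S1' * S2 * S2' + S1 * S1' * S3 * S3' + S2 * S2' * S3 * S3')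
    - 4 * S0' * S1 * S2 * S3 - 4 * S0 * S1' * S2' * S3'"
proof -
  have l1: "lincomb3 1 0 0 w1 w2 w3 = w1" "lincomb3 0 1 0 w1 w2 w3 = w2" "lincomb3 0 0 1 w1 w2 w3 = w3"
    by (auto simp: lincomb3_def)
  have o12: "omega w1 w2 = 0" using assms(2) unfolding lagrangian_span_def
    by (metis l1)
  have o13: "omega w1 w3 = 0" using assms(2) unfolding lagrangian_span_def
    by (metis l1)
  have o23: "omega w2 w3 = 0" using assms(2) unfolding lagrangian_span_def
    by (metis l1)
  have c: "\<And>k. pl w1 w2 w3 0 3 k + pl w1 w2 w3 1 4 k + pl w1 w2 w3 2 5 k = 0"
    using contr o12 o13 o23 by simp
  have l0: "pl w1 w2 w3 0 2 5 = - pl w1 w2 w3 0 1 4" using c[of 0] unfolding pl_def by algebra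
  have l1': "pl w1 w2 w3 1 2 5 = pl w1 w2 w3 0 1 3" using c[of 1] unfolding pl_def by algebra
  have l2: "pl w1 w2 w3 1 2 4 = - pl w1 w2 w3 0 2 3" using c[of 2] unfolding pl_def by algebra
  have l3: "pl w1 w2 w3 2 3 5 = - pl w1 w2 w3 1 3 4" using c[of 3] unfolding pl_def by algebra
  have l4: "pl w1 w2 w3 2 4 5 = pl w1 w2 w3 0 3 4" using c[of 4] unfolding pl_def by algebra
  have l5: "pl w1 w2 w3 1 4 5 = - pl w1 w2 w3 0 3 5" using c[of 5] unfolding pl_def by algebra
  note lin = l0 l1' l2 l3 l4 l5
  have po0: "(-1)*(pl w1 w2 w3 0 1 2)*(pl w1 w2 w3 0 3 4) + (1)*(pl w1 w2 w3 0 1 3)*(pl w1 w2 w3 0 2 4) + (-1)*(pl w1 w2 w3 0 1 4)*(pl w1 w2 w3 0 2 3) = 0" unfolding pl_def by algebra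
  have po1: "(-1)*(pl w1 w2 w3 0 1 2)*(pl w1 w2 w3 0 3 5) + (1)*(pl w1 w2 w3 0 1 3)*(pl w1 w2 w3 0 2 5) + (-1)*(pl w1 w2 w3 0 1 5)*(pl w1 w2 w3 0 2 3) = 0" unfolding pl_def by algebra
  have po2: "(-1)*(pl w1 w2 w3 0 1 2)*(pl w1 w2 w3 0 4 5) + (1)*(pl w1 w2 w3 0 1 4)*(pl w1 w2 w3 0 2 5) + (-1)*(pl w1 w2 w3 0 1 5)*(pl w1 w2 w3 0 2 4) = 0" unfolding pl_def by algebra
  have po3: "(-1)*(pl w1 w2 w3 0 1 3)*(pl w1 w2 w3 0 4 5) + (1)*(pl w1 w2 w3 0 1 4)*(pl w1 w2 w3 0 3 5) + (-1)*(pl w1 w2 w3 0 1 5)*(pl w1 w2 w3 0 3 4) = 0" unfolding pl_def by algebra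
  have po4: "(-1)*(pl w1 w2 w3 0 1 2)*(pl w1 w2 w3 1 3 4) + (1)*(pl w1 w2 w3 0 1 3)*(pl w1 w2 w3 1 2 4) + (-1)*(pl w1 w2 w3 0 1 4)*(pl w1 w2 w3 1 2 3) = 0" unfolding pl_def by algebra
  have po5: "(-1)*(pl w1 w2 w3 0 1 2)*(pl w1 w2 w3 1 3 5) + (1)*(pl w1 w2 w3 0 1 3)*(pl w1 w2 w3 1 2 5) + (-1)*(pl w1 w2 w3 0 1 5)*(pl w1 w2 w3 1 2 3) = 0" unfolding pl_def by algebra
  have po6: "(-1)*(pl w1 w2 w3 0 1 3)*(pl w1 w2 w3 1 4 5) + (1)*(pl w1 w2 w3 0 1 4)*(pl w1 w2 w3 1 3 5) + (-1)*(pl w1 w2 w3 0 1 5)*(pl w1 w2 w3 1 3 4) = 0" unfolding pl_def by algebra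
  have po7: "(1)*(pl w1 w2 w3 0 1 2)*(pl w1 w2 w3 3 4 5) + (-1)*(pl w1 w2 w3 0 1 3)*(pl w1 w2 w3 2 4 5) + (1)*(pl w1 w2 w3 0 1 4)*(pl w1 w2 w3 2 3 5) + (-1)*(pl w1 w2 w3 0 1 5)*(pl w1 w2 w3 2 3 4) = 0" unfolding pl_def by algebra
  have po8: "(-1)*(pl w1 w2 w3 0 2 3)*(pl w1 w2 w3 0 4 5) + (1)*(pl w1 w2 w3 0 2 4)*(pl w1 w2 w3 0 3 5) + (-1)*(pl w1 w2 w3 0 2 5)*(pl w1 w2 w3 0 3 4) = 0" unfolding pl_def by algebra
  have po9: "(-1)*(pl w1 w2 w3 0 1 2)*(pl w1 w2 w3 2 3 4) + (1)*(pl w1 w2 w3 0 2 3)*(pl w1 w2 w3 1 2 4) + (-1)*(pl w1 w2 w3 0 2 4)*(pl w1 w2 w3 1 2 3) = 0" unfolding pl_def by algebra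
  have po10: "(-1)*(pl w1 w2 w3 0 1 2)*(pl w1 w2 w3 3 4 5) + (-1)*(pl w1 w2 w3 0 2 3)*(pl w1 w2 w3 1 4 5) + (1)*(pl w1 w2 w3 0 2 4)*(pl w1 w2 w3 1 3 5) + (-1)*(pl w1 w2 w3 0 2 5)*(pl w1 w2 w3 1 3 4) = 0" unfolding pl_def by algebra
  have po11: "(-1)*(pl w1 w2 w3 0 2 3)*(pl w1 w2 w3 2 4 5) + (1)*(pl w1 w2 w3 0 2 4)*(pl w1 w2 w3 2 3 5) + (-1)*(pl w1 w2 w3 0 2 5)*(pl w1 w2 w3 2 3 4) = 0" unfolding pl_def by algebra
  have po12: "(-1)*(pl w1 w2 w3 0 1 3)*(pl w1 w2 w3 3 4 5) + (1)*(pl w1 w2 w3 0 3 4)*(pl w1 w2 w3 1 3 5) + (-1)*(pl w1 w2 w3 0 3 5)*(pl w1 w2 w3 1 3 4) = 0" unfolding pl_def by algebra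
  have po13: "(-1)*(pl w1 w2 w3 0 1 4)*(pl w1 w2 w3 2 3 5) + (1)*(pl w1 w2 w3 0 2 4)*(pl w1 w2 w3 1 3 5) + (-1)*(pl w1 w2 w3 0 3 4)*(pl w1 w2 w3 1 2 5) + (-1)*(pl w1 w2 w3 0 4 5)*(pl w1 w2 w3 1 2 3) = 0" unfolding pl_def by algebra
  show ?thesis unfolding S0_def S1_def S2_def S3_def S0'_def S1'_def S2'_def S3'_def
    by (rule quartic_abs[OF lin po0 po1 po2 po3 po4 po5 po6 po7 po8 po9 po10 po11 po12 po13])
qed

end
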